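(* Let $S^1=\mathbb{R}/2\pi\mathbb{Z}$ with coordinate $\theta$, let $T>0$, and let $u:[0,T]\times S^1\to\mathbb{R}$ be a smooth solution of the Camassa-Holm equation (with the coefficients below) $$\partial_t u-\tfrac14\partial_{t\theta\theta}u+3\,\partial_\theta u\,u-\tfrac12\,\partial_{\theta\theta}u\,\partial_\theta u-\tfrac14\,\partial_{\theta\theta\theta}u\,u=0 .$$ Identify $S^1\times(0,\infty)$ with $\mathbb{R}^2\setminus\{0\}$ via polar coordinates $(\theta,r)\mapsto re^{i\theta}$, and define the time-dependent vector field $v$ on $\mathbb{R}^2\setminus\{0\}$ by $$v(t,\theta,r)=u(t,\theta)\,\partial_\theta+\tfrac{r}{2}\,\partial_\theta u(t,\theta)\,\partial_r .$$ Then there exists a smooth function $P:[0,T]\times(\mathbb{R}^2\setminus\{0\})\to\mathbb{R}$ (of the form $P(t,\theta,r)=\tfrac12 r^2p(t,\theta)$ for some smooth $p$) such that $v$ solves the incompressible Euler equation on $\mathbb{R}^2\setminus\{0\}$ with respect to the density $\rho=r^{-4}\,\mathrm{Leb}$: $$\partial_t v+\nabla_v v=-\nabla P,\qquad \nabla\cdot(\rho v)=0,$$ where $\nabla$, $\nabla_v v$ and $\nabla\cdot$ refer to the Euclidean structure of $\mathbb{R}^2$.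
   Context: $\mathrm{Leb}$ denotes Lebesgue measure on $\mathbb{R}^2$; in polar coordinates $r^{-4}\mathrm{Leb}=r^{-3}\,\mathrm{d}r\,\mathrm{d}\theta$. The components $u$ and $\tfrac r2\partial_\theta u$ are the components of $v$ in the coordinate frame $(\partial_\theta,\partial_r)$ of polar coordinates. *)

theory Defs
  imports "HOL-Analysis.Analysis"
begin

text \<open>C-infinity smoothness of a real-valued function on a subset S of a Euclidean
  space (derivatives taken within S, so that one-sided derivatives at the boundary
  of a closed time interval are allowed): f is differentiable within S and every
  partial derivative is again smooth on S.\<close>
coinductive smooth_on :: "'a::euclidean_space set \<Rightarrow> ('a \<Rightarrow> real) \<Rightarrow> bool" where
  "\<lbrakk>\<forall>x\<in>S. (f has_derivative f' x) (at x within S);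
    \<forall>b\<in>Basis. smooth_on S (\<lambda>x. f' x b)\<rbrakk> \<Longrightarrow> smooth_on S f"

definition dd :: "'a::real_normed_vector set \<Rightarrow> 'a \<Rightarrow> ('a \<Rightarrow> 'b::real_normed_vector) \<Rightarrow> 'a \<Rightarrow> 'b" where
  "dd S v f x = frechet_derivative f (at x within S) v"

text \<open>Domain of u: [0,T] x R (theta is the lifted angle coordinate), as uncurried function.\<close>
definition udom :: "real \<Rightarrow> (real \<times> real) set" where
  "udom T = {0..T} \<times> UNIV"

text \<open>Space-time domain of v: [0,T] x (R^2 - {0}), with R^2 identified with the complex plane.\<close>
definition vdom :: "real \<Rightarrow> (real \<times> complex) set" where
  "vdom T = {0..T} \<times> (UNIV - {0})"

text \<open>The vector field v = u d_theta + (r/2) (d_theta u) d_r written in Euclidean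
  coordinates: at z = r e^(i theta), d_theta = i z and d_r = z / r.\<close>
definition vfield :: "real \<Rightarrow> (real \<Rightarrow> real \<Rightarrow> real) \<Rightarrow> real \<times> complex \<Rightarrow> complex" where
  "vfield T u = (\<lambda>(t, z).
     let \<theta> = Arg z; r = cmod z; u\<theta> = dd (udom T) (0, 1) (\<lambda>(s, \<phi>). u s \<phi>) (t, \<theta>)
     in of_real (u t \<theta>) * (\<i> * z) + of_real (r / 2 * u\<theta>) * (z / of_real r))"

definition grad_x :: "real \<Rightarrow> (real \<times> complex \<Rightarrow> real) \<Rightarrow> real \<times> complex \<Rightarrow> complex" where
  "grad_x T P x = (\<Sum>b\<in>Basis. dd (vdom T) (0, b) P x *\<^sub>R b)"

definition div_x :: "real \<Rightarrow> (real \<times> complex \<Rightarrow> complex) \<Rightarrow> real \<times> complex \<Rightarrow> real" where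
  "div_x T W x = (\<Sum>b\<in>Basis. dd (vdom T) (0, b) W x \<bullet> b)"

end

theory Submission
  imports Defs
begin


lemma uniq_cond:
  fixes U :: "'b::euclidean_space set" and t T :: real
  assumes T: "T>0" and t: "t \<in> {0..T}" and z: "z \<in> U" and U: "open U"
    and i: "i \<in> Basis" and e: "e>0"
  shows "\<exists>d. 0<\<bar>d\<bar> \<and> \<bar>d\<bar><e \<and> (t,z) + d *\<^sub>R i \<in> {0..T} \<times> U"
proof -
  from i consider "i = (1,0)" | j where "j \<in> Basis" "i = (0,j)"
    unfolding Basis_prod_def by auto
  then show ?thesis
  proof cases
    case 1
    define m where "m = min (e/2) (T/2)"
    have m: "m > 0" "m < e" "m \<le> T/2" using T e by (auto simp: m_def)
    show ?thesis
    proof (cases "t \<le> T/2")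
      case True
      then show ?thesis using m t 1 z by (intro exI[of _ m]) auto
    next
      case False
      then show ?thesis using m t 1 z by (intro exI[of _ "-m"]) auto
    qed
  next
    case 2
    obtain r where r: "r>0" "ball z r \<subseteq> U" using U z open_contains_ball by blast
    define m where "m = min (e/2) (r/2)"
    have m: "m > 0" "m < e" "m < r" using r e by (auto simp: m_def)
    have "z + m *\<^sub>R j \<in> ball z r" using m 2 by (auto simp: dist_norm)
    then show ?thesis using m t 2 r by (intro exI[of _ m]) auto
  qed
qed

lemma dd_eq:
  fixes U :: "'b::euclidean_space set" and t T :: real and f :: "real \<times> 'b \<Rightarrow> 'c::real_normed_vector"
  assumes d: "(f has_derivative F) (at (t,z) within {0..T}\<times>U)"
    and T: "T>0" and t: "t \<in> {0..T}" and z: "z \<in> U" and U: "open U"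
  shows "dd ({0..T}\<times>U) v f (t,z) = F v"
proof -
  have w: "(f has_derivative frechet_derivative f (at (t,z) within {0..T}\<times>U)) (at (t,z) within {0..T}\<times>U)"
    using d frechet_derivative_works differentiableI by blast
  have "frechet_derivative f (at (t,z) within {0..T}\<times>U) = F"
    by (rule frechet_derivative_unique_within[OF w d]) (use uniq_cond[OF T t z U] in auto)
  then show ?thesis by (simp add: dd_def)
qed

lemma dd_eq_u:
  assumes "(f has_derivative F) (at x within udom T)" "T>0" "x \<in> udom T"
  shows "dd (udom T) v f x = F v"
  using assms dd_eq[of f F "fst x" "snd x" T UNIV v] by (cases x) (auto simp: udom_def)

lemma dd_eq_v:
  assumes "(f has_derivative F) (at x within vdom T)" "T>0" "x \<in> vdom T"
  shows "dd (vdom T) v f x = F v"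
  using assms dd_eq[of f F "fst x" "snd x" T "UNIV - {0}" v] by (cases x) (auto simp: vdom_def)

lemma uniq_u:
  assumes "(f has_derivative F) (at x within udom T)" "(f has_derivative F') (at x within udom T)"
   "T>0" "x \<in> udom T"
  shows "F = F'"
  using dd_eq_u[OF assms(1,3,4)] dd_eq_u[OF assms(2,3,4)] by (metis ext)

lemma smooth_on_cong:
  assumes "smooth_on S h" "\<forall>x\<in>S. f x = h x"
  shows "smooth_on S f"
proof -
  have "\<exists>h. smooth_on S h \<and> (\<forall>x\<in>S. f x = h x)" using assms by blast
  then show ?thesis
  proof (coinduction arbitrary: f)
    case (smooth_on f)
    then obtain h where h: "smooth_on S h" "\<forall>x\<in>S. f x = h x" by blast
    from h(1) obtain h' where h': "\<forall>x\<in>S. (h has_derivative h' x) (at x within S)"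
      "\<forall>b\<in>Basis. smooth_on S (\<lambda>x. h' x b)" by (cases rule: smooth_on.cases) auto
    have "\<forall>x\<in>S. (f has_derivative h' x) (at x within S)"
      using h' h(2) by (metis has_derivative_transform_within zero_less_one)
    then show ?case using h'(2) by (intro exI[of _ S] exI[of _ f] exI[of _ h']) simp
  qed
qed

definition "hasD S f F \<longleftrightarrow> (\<forall>x\<in>S. (f has_derivative F x) (at x within S))"

inductive_set alg :: "('a \<Rightarrow> real) set \<Rightarrow> ('a \<Rightarrow> real) set" for G where
  gen: "g \<in> G \<Longrightarrow> g \<in> alg G"
| const: "(\<lambda>x. c) \<in> alg G"
| add: "f \<in> alg G \<Longrightarrow> g \<in> alg G \<Longrightarrow> (\<lambda>x. f x + g x) \<in> alg G"
| mult: "f \<in> alg G \<Longrightarrow> g \<in> alg G \<Longrightarrow> (\<lambda>x. f x * g x) \<in> alg G"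

definition "goodD S A f \<longleftrightarrow> (\<exists>F. hasD S f F \<and> (\<forall>b\<in>Basis. \<exists>h\<in>A. \<forall>x\<in>S. F x b = h x))"

lemma alg_goodD:
  assumes G: "\<forall>g\<in>G. goodD S (alg G) g" and f: "f \<in> alg G"
  shows "goodD S (alg G) f"
  using f
proof induction
  case (gen g) then show ?case using G by blast
next
  case (const c)
  show ?case unfolding goodD_def hasD_def
    by (rule exI[of _ "\<lambda>x h. 0"]) (auto intro: alg.const)
next
  case (add f g)
  then obtain F1 F2 where F: "hasD S f F1" "\<forall>b\<in>Basis. \<exists>h\<in>alg G. \<forall>x\<in>S. F1 x b = h x"
    "hasD S g F2" "\<forall>b\<in>Basis. \<exists>h\<in>alg G. \<forall>x\<in>S. F2 x b = h x" unfolding goodD_def by blast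
  show ?case unfolding goodD_def
  proof (intro exI[of _ "\<lambda>x h. F1 x h + F2 x h"] conjI ballI)
    show "hasD S (\<lambda>x. f x + g x) (\<lambda>x h. F1 x h + F2 x h)"
      using F unfolding hasD_def by (auto intro: has_derivative_add)
    fix b :: 'a assume b: "b \<in> Basis"
    then obtain h1 h2 where "h1 \<in> alg G" "h2 \<in> alg G" "\<forall>x\<in>S. F1 x b = h1 x" "\<forall>x\<in>S. F2 x b = h2 x"
      using F by blast
    then show "\<exists>h\<in>alg G. \<forall>x\<in>S. F1 x b + F2 x b = h x"
      by (intro bexI[of _ "\<lambda>x. h1 x + h2 x"]) (auto intro: alg.add)
  qed
next
  case (mult f g)
  then obtain F1 F2 where F: "hasD S f F1" "\<forall>b\<in>Basis. \<exists>h\<in>alg G. \<forall>x\<in>S. F1 x b = h x"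
    "hasD S g F2" "\<forall>b\<in>Basis. \<exists>h\<in>alg G. \<forall>x\<in>S. F2 x b = h x" unfolding goodD_def by blast
  show ?case unfolding goodD_def
  proof (intro exI[of _ "\<lambda>x h. f x * F2 x h + F1 x h * g x"] conjI ballI)
    show "hasD S (\<lambda>x. f x * g x) (\<lambda>x h. f x * F2 x h + F1 x h * g x)"
      using F unfolding hasD_def by (auto intro: has_derivative_mult)
    fix b :: 'a assume b: "b \<in> Basis"
    then obtain h1 h2 where "h1 \<in> alg G" "h2 \<in> alg G" "\<forall>x\<in>S. F1 x b = h1 x" "\<forall>x\<in>S. F2 x b = h2 x"
      using F by blast
    then show "\<exists>h\<in>alg G. \<forall>x\<in>S. f x * F2 x b + F1 x b * g x = h x"
      using mult by (intro bexI[of _ "\<lambda>x. f x * h2 x + h1 x * g x"]) (auto intro: alg.add alg.mult)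
  qed
qed

lemma goodD_smooth:
  fixes S :: "'a::euclidean_space set"
  assumes A: "\<forall>f\<in>A. goodD S A f" and f: "f \<in> A"
  shows "smooth_on S f"
proof -
  have "\<exists>h\<in>A. \<forall>x\<in>S. f x = h x" using f by blast
  then show ?thesis
  proof (coinduction arbitrary: f)
    case (smooth_on f)
    then obtain h where h: "h \<in> A" "\<forall>x\<in>S. f x = h x" by blast
    then obtain F where F: "hasD S h F" "\<forall>b\<in>Basis. \<exists>h\<in>A. \<forall>x\<in>S. F x b = h x"
      using A unfolding goodD_def by blast
    have "\<forall>x\<in>S. (f has_derivative F x) (at x within S)"
      using F(1) h(2) unfolding hasD_def by (metis has_derivative_transform_within zero_less_one)
    then show ?case using F(2) by (intro exI[of _ S] exI[of _ f] exI[of _ F]) blast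
  qed
qed

lemma alg_smooth:
  fixes S :: "'a::euclidean_space set"
  assumes "\<forall>g\<in>G. goodD S (alg G) g" "f \<in> alg G"
  shows "smooth_on S f"
  using goodD_smooth[of "alg G" S f] alg_goodD[OF assms(1)] assms(2) by blast


lemma lin2:
  assumes "bounded_linear (G::real\<times>real \<Rightarrow> real)"
  shows "G h = fst h * G (1,0) + snd h * G (0,1)"
proof -
  interpret bounded_linear G by fact
  obtain a b where h: "h = (a,b)" by (cases h)
  have "G (a,b) = G (a *\<^sub>R (1,0) + b *\<^sub>R (0,1))" by simp
  also have "\<dots> = a * G (1,0) + b * G (0,1)" by (simp only: add scale) simp
  finally show ?thesis by (simp add: h)
qed

lemma smooth_hasD:
  assumes T: "T>0" and g: "smooth_on (udom T) g"
  shows "hasD (udom T) g (\<lambda>x h. fst h * dd (udom T) (1,0) g x + snd h * dd (udom T) (0,1) g x)"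
    "smooth_on (udom T) (\<lambda>x. dd (udom T) (1,0) g x)"
    "smooth_on (udom T) (\<lambda>x. dd (udom T) (0,1) g x)"
proof -
  from g obtain G where G: "\<forall>x\<in>udom T. (g has_derivative G x) (at x within udom T)"
      "\<forall>b\<in>Basis. smooth_on (udom T) (\<lambda>x. G x b)" by (cases rule: smooth_on.cases) auto
  have dd: "dd (udom T) e g x = G x e" if "x \<in> udom T" for x e
    using dd_eq_u[OF _ T that] G(1) that by blast
  have B: "(1::real,0::real) \<in> Basis" "(0::real,1::real) \<in> Basis" by (auto simp: Basis_prod_def)
  show "smooth_on (udom T) (\<lambda>x. dd (udom T) (1,0) g x)"
    by (rule smooth_on_cong[OF G(2)[rule_format, OF B(1)]]) (simp add: dd)
  show "smooth_on (udom T) (\<lambda>x. dd (udom T) (0,1) g x)"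
    by (rule smooth_on_cong[OF G(2)[rule_format, OF B(2)]]) (simp add: dd)
  show "hasD (udom T) g (\<lambda>x h. fst h * dd (udom T) (1,0) g x + snd h * dd (udom T) (0,1) g x)"
    unfolding hasD_def
  proof
    fix x assume x: "x \<in> udom T"
    have "G x = (\<lambda>h. fst h * dd (udom T) (1,0) g x + snd h * dd (udom T) (0,1) g x)"
    proof
      fix h
      have l: "G x h = fst h * G x (1,0) + snd h * G x (0,1)"
        by (rule lin2[OF has_derivative_bounded_linear[OF G(1)[rule_format, OF x]]])
      show "G x h = fst h * dd (udom T) (1,0) g x + snd h * dd (udom T) (0,1) g x"
        by (simp only: l dd[OF x])
    qed
    then show "(g has_derivative (\<lambda>h. fst h * dd (udom T) (1,0) g x + snd h * dd (udom T) (0,1) g x)) (at x within udom T)"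
      using G(1) x by metis
  qed
qed

definition SP :: "real \<Rightarrow> (real\<times>real \<Rightarrow> real) set" where
  "SP T = {g. smooth_on (udom T) g \<and> (\<forall>t\<in>{0..T}. \<forall>\<theta>. g (t,\<theta>+2*pi) = g (t,\<theta>))}"

lemma SP_dd:
  assumes T: "T>0" and g: "g \<in> SP T"
  shows "(\<lambda>x. dd (udom T) (1,0) g x) \<in> SP T" "(\<lambda>x. dd (udom T) (0,1) g x) \<in> SP T"
proof -
  let ?F = "\<lambda>x h. fst h * dd (udom T) (1,0) g x + snd h * dd (udom T) (0,1) g x"
  have sm: "smooth_on (udom T) g" and per: "\<forall>t\<in>{0..T}. \<forall>\<theta>. g (t,\<theta>+2*pi) = g (t,\<theta>)"
    using g by (auto simp: SP_def)
  note H = smooth_hasD[OF T sm]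
  have perF: "?F (t,\<theta>+2*pi) = ?F (t,\<theta>)" if t: "t \<in> {0..T}" for t \<theta>
  proof -
    let ?s = "\<lambda>x::real\<times>real. x + (0, 2*pi)"
    have x: "(t,\<theta>) \<in> udom T" "(t,\<theta>+2*pi) \<in> udom T" using t by (auto simp: udom_def)
    have s: "(?s has_derivative id) (at (t,\<theta>) within udom T)"
      unfolding id_def by (rule has_derivative_add_const[OF has_derivative_ident])
    have img: "?s ` udom T \<subseteq> udom T" by (auto simp: udom_def)
    have sp: "?s (t,\<theta>) = (t,\<theta>+2*pi)" by simp
    have gd0: "(g has_derivative ?F (t,\<theta>+2*pi)) (at (t,\<theta>+2*pi) within udom T)"
      using H(1) x(2) unfolding hasD_def by blast
    have gd: "(g has_derivative ?F (t,\<theta>+2*pi)) (at (?s (t,\<theta>)) within ?s ` udom T)"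
      unfolding sp by (rule has_derivative_subset[OF gd0 img])
    have ch: "((g \<circ> ?s) has_derivative ?F (t,\<theta>+2*pi) \<circ> id) (at (t,\<theta>) within udom T)"
      by (rule diff_chain_within[OF s gd])
    have eq: "\<forall>y\<in>udom T. (g \<circ> ?s) y = g y"
    proof
      fix y assume "y \<in> udom T"
      then obtain a b where y: "y = (a,b)" "a \<in> {0..T}" by (cases y) (auto simp: udom_def)
      then show "(g \<circ> ?s) y = g y" using per by simp
    qed
    have "(g has_derivative ?F (t,\<theta>+2*pi) \<circ> id) (at (t,\<theta>) within udom T)"
      by (rule has_derivative_transform_within[OF ch zero_less_one x(1)]) (use eq in auto)
    then have "(g has_derivative ?F (t,\<theta>+2*pi)) (at (t,\<theta>) within udom T)" by simp
    moreover have "(g has_derivative ?F (t,\<theta>)) (at (t,\<theta>) within udom T)"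
      using H(1) x(1) unfolding hasD_def by blast
    ultimately show ?thesis by (rule uniq_u[OF _ _ T x(1)])
  qed
  have d1: "dd (udom T) (1,0) g (t,\<theta>+2*pi) = dd (udom T) (1,0) g (t,\<theta>)"
    and d2: "dd (udom T) (0,1) g (t,\<theta>+2*pi) = dd (udom T) (0,1) g (t,\<theta>)" if "t \<in> {0..T}" for t \<theta>
  proof -
    have "(\<lambda>h::real\<times>real. fst h * dd (udom T) (1,0) g (t,\<theta>+2*pi) + snd h * dd (udom T) (0,1) g (t,\<theta>+2*pi))
        = (\<lambda>h. fst h * dd (udom T) (1,0) g (t,\<theta>) + snd h * dd (udom T) (0,1) g (t,\<theta>))"
      using perF[OF that] by simp
    from fun_cong[OF this, of "(1,0)"] fun_cong[OF this, of "(0,1)"]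
    show "dd (udom T) (1,0) g (t,\<theta>+2*pi) = dd (udom T) (1,0) g (t,\<theta>)"
      "dd (udom T) (0,1) g (t,\<theta>+2*pi) = dd (udom T) (0,1) g (t,\<theta>)" by simp_all
  qed
  show "(\<lambda>x. dd (udom T) (1,0) g x) \<in> SP T" "(\<lambda>x. dd (udom T) (0,1) g x) \<in> SP T"
  proof -
    show "(\<lambda>x. dd (udom T) (1,0) g x) \<in> SP T" unfolding SP_def mem_Collect_eq
    proof (intro conjI ballI allI)
      show "smooth_on (udom T) (\<lambda>x. dd (udom T) (1,0) g x)" by (rule H(2))
      fix t \<theta> assume "t \<in> {0..T}"
      then show "dd (udom T) (1,0) g (t,\<theta>+2*pi) = dd (udom T) (1,0) g (t,\<theta>)" by (rule d1)
    qed
    show "(\<lambda>x. dd (udom T) (0,1) g x) \<in> SP T" unfolding SP_def mem_Collect_eq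
    proof (intro conjI ballI allI)
      show "smooth_on (udom T) (\<lambda>x. dd (udom T) (0,1) g x)" by (rule H(3))
      fix t \<theta> assume "t \<in> {0..T}"
      then show "dd (udom T) (0,1) g (t,\<theta>+2*pi) = dd (udom T) (0,1) g (t,\<theta>)" by (rule d2)
    qed
  qed
qed

lemma SP_goodD:
  assumes T: "T>0" and g: "g \<in> SP T"
  shows "goodD (udom T) (alg (SP T)) g"
proof -
  have sm: "smooth_on (udom T) g" using g by (auto simp: SP_def)
  note H = smooth_hasD[OF T sm]
  show ?thesis unfolding goodD_def
  proof (intro exI[of _ "\<lambda>x h. fst h * dd (udom T) (1,0) g x + snd h * dd (udom T) (0,1) g x"] conjI ballI)
    show "hasD (udom T) g (\<lambda>x h. fst h * dd (udom T) (1,0) g x + snd h * dd (udom T) (0,1) g x)" by (rule H(1))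
    fix b :: "real\<times>real" assume "b \<in> Basis"
    then have "b = (1,0) \<or> b = (0,1)" by (auto simp: Basis_prod_def)
    then show "\<exists>h\<in>alg (SP T). \<forall>x\<in>udom T. fst b * dd (udom T) (1, 0) g x + snd b * dd (udom T) (0, 1) g x = h x"
    proof
      assume b: "b = (1,0)"
      show ?thesis by (rule bexI[of _ "\<lambda>x. dd (udom T) (1,0) g x"]) (simp_all add: b alg.gen SP_dd[OF T g])
    next
      assume b: "b = (0,1)"
      show ?thesis by (rule bexI[of _ "\<lambda>x. dd (udom T) (0,1) g x"]) (simp_all add: b alg.gen SP_dd[OF T g])
    qed
  qed
qed

lemma SP_alg_smooth:
  assumes "T>0" "f \<in> alg (SP T)"
  shows "smooth_on (udom T) f"
  by (rule alg_smooth[OF _ assms(2)]) (use SP_goodD[OF assms(1)] in blast)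


lemma smooth_cont: "smooth_on S f \<Longrightarrow> continuous_on S f"
  by (erule smooth_on.cases) (auto simp: continuous_on_eq_continuous_within intro: has_derivative_continuous)

lemma curve_deriv:
  assumes T: "T>0" and g: "smooth_on (udom T) g" and s: "s \<in> X"
    and c: "(c has_derivative (\<lambda>d. d *\<^sub>R w)) (at s within X)" and cX: "c ` X \<subseteq> udom T"
  shows "((\<lambda>s. g (c s)) has_real_derivative (fst w * dd (udom T) (1,0) g (c s) + snd w * dd (udom T) (0,1) g (c s))) (at s within X)"
proof -
  let ?G = "\<lambda>h. fst h * dd (udom T) (1,0) g (c s) + snd h * dd (udom T) (0,1) g (c s)"
  have cs: "c s \<in> udom T" using s cX by blast
  have "(g has_derivative ?G) (at (c s) within udom T)"
    using smooth_hasD(1)[OF T g] cs unfolding hasD_def by blast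
  then have "(g has_derivative ?G) (at (c s) within c ` X)" by (rule has_derivative_subset[OF _ cX])
  from diff_chain_within[OF c this]
  have "((g \<circ> c) has_derivative ?G \<circ> (\<lambda>d. d *\<^sub>R w)) (at s within X)" .
  moreover have "?G \<circ> (\<lambda>d. d *\<^sub>R w) = (*) (fst w * dd (udom T) (1,0) g (c s) + snd w * dd (udom T) (0,1) g (c s))"
    by (auto simp: fun_eq_iff algebra_simps)
  ultimately show ?thesis unfolding has_field_derivative_def o_def by simp
qed

lemma partial_t:
  assumes T: "T>0" and g: "smooth_on (udom T) g" and I: "I \<subseteq> {0..T}" and s: "s \<in> I"
  shows "((\<lambda>s. g (s,\<theta>)) has_real_derivative dd (udom T) (1,0) g (s,\<theta>)) (at s within I)"
proof -
  have c: "((\<lambda>s. (s,\<theta>)) has_derivative (\<lambda>d. d *\<^sub>R (1::real,0::real))) (at s within I)"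
    by (auto intro!: derivative_eq_intros)
  have "(\<lambda>s. (s,\<theta>)) ` I \<subseteq> udom T" using I by (auto simp: udom_def)
  from curve_deriv[OF T g s c this] show ?thesis by simp
qed

lemma partial_th:
  assumes T: "T>0" and g: "smooth_on (udom T) g" and t: "t \<in> {0..T}" and th: "\<theta> \<in> J"
  shows "((\<lambda>\<theta>. g (t,\<theta>)) has_real_derivative dd (udom T) (0,1) g (t,\<theta>)) (at \<theta> within J)"
proof -
  have c: "((\<lambda>\<theta>. (t,\<theta>)) has_derivative (\<lambda>d. d *\<^sub>R (0::real,1::real))) (at \<theta> within J)"
    by (auto intro!: derivative_eq_intros)
  have "(\<lambda>\<theta>. (t,\<theta>)) ` J \<subseteq> udom T" using t by (auto simp: udom_def)
  from curve_deriv[OF T g th c this] show ?thesis by simp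
qed

lemma mvt2:
  fixes \<phi> :: "real \<Rightarrow> real"
  assumes "\<And>s. s \<in> {min a b..max a b} \<Longrightarrow> (\<phi> has_real_derivative D s) (at s within {min a b..max a b})"
  shows "\<exists>\<xi>\<in>{min a b..max a b}. \<phi> b - \<phi> a = (b - a) * D \<xi>"
proof (cases "a \<le> b")
  case True
  then have "\<exists>x\<in>{a..b}. \<phi> b - \<phi> a = (*) (D x) (b - a)"
    using assms by (intro mvt_very_simple) (auto simp: has_field_derivative_def)
  then show ?thesis using True by (auto simp: mult.commute)
next
  case False
  then have "\<exists>x\<in>{b..a}. \<phi> a - \<phi> b = (*) (D x) (a - b)"
    using assms by (intro mvt_very_simple) (auto simp: has_field_derivative_def)
  then obtain x where "x\<in>{b..a}" "\<phi> a - \<phi> b = D x * (a - b)" by auto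
  then show ?thesis using False by (intro bexI[of _ x]) (auto simp: algebra_simps)
qed

lemma clairaut:
  assumes T: "T>0" and f: "smooth_on (udom T) f" and x: "x \<in> udom T"
  shows "dd (udom T) (0,1) (dd (udom T) (1,0) f) x = dd (udom T) (1,0) (dd (udom T) (0,1) f) x"
proof -
  define ft where "ft = dd (udom T) (1,0) f"
  define fh where "fh = dd (udom T) (0,1) f"
  define A where "A = dd (udom T) (0,1) ft"
  define B where "B = dd (udom T) (1,0) fh"
  have sft: "smooth_on (udom T) ft" and sfh: "smooth_on (udom T) fh"
    using smooth_hasD(2,3)[OF T f] by (simp_all add: ft_def fh_def)
  have sA: "smooth_on (udom T) A" using smooth_hasD(3)[OF T sft] by (simp add: A_def)
  have sB: "smooth_on (udom T) B" using smooth_hasD(2)[OF T sfh] by (simp add: B_def)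
  obtain t0 \<theta>0 where x0: "x = (t0,\<theta>0)" by (cases x)
  have t0: "t0 \<in> {0..T}" using x x0 by (auto simp: udom_def)
  have key: "\<bar>A x - B x\<bar> < 2 * e" if e: "e > 0" for e
  proof -
    obtain dA where dA: "dA > 0" "\<forall>y\<in>udom T. dist y x < dA \<longrightarrow> dist (A y) (A x) < e"
      using smooth_cont[OF sA] x e unfolding continuous_on_iff by blast
    obtain dB where dB: "dB > 0" "\<forall>y\<in>udom T. dist y x < dB \<longrightarrow> dist (B y) (B x) < e"
      using smooth_cont[OF sB] x e unfolding continuous_on_iff by blast
    define \<delta> where "\<delta> = min dA dB"
    have \<delta>: "\<delta> > 0" "\<delta> \<le> dA" "\<delta> \<le> dB" using dA dB by (auto simp: \<delta>_def)
    have "(1::real,0::real) \<in> Basis" by (auto simp: Basis_prod_def)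
    from uniq_cond[OF T t0 UNIV_I open_UNIV this, of "\<delta>/2" \<theta>0] \<delta>
    obtain h where h: "0 < \<bar>h\<bar>" "\<bar>h\<bar> < \<delta>/2" "t0 + h \<in> {0..T}" by auto
    define k where "k = \<bar>h\<bar>"
    define I where "I = {min t0 (t0+h)..max t0 (t0+h)}"
    define J where "J = {min \<theta>0 (\<theta>0+k)..max \<theta>0 (\<theta>0+k)}"
    have I: "I \<subseteq> {0..T}" using t0 h(3) by (auto simp: I_def)
    have Ih: "\<bar>s - t0\<bar> \<le> \<bar>h\<bar>" if "s \<in> I" for s using that by (auto simp: I_def)
    have Jk: "\<bar>s - \<theta>0\<bar> \<le> \<bar>h\<bar>" if "s \<in> J" for s using that by (auto simp: J_def k_def)
    have close: "(s,r) \<in> udom T \<and> dist (s,r) x < \<delta>" if "s \<in> I" "r \<in> J" for s r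
    proof -
      have "dist (s,r) x = norm (s - t0, r - \<theta>0)" by (simp add: x0 dist_norm)
      also have "\<dots> \<le> norm (s - t0) + norm (r - \<theta>0)" by (rule norm_Pair_le)
      also have "\<dots> \<le> 2 * \<bar>h\<bar>" using Ih[OF that(1)] Jk[OF that(2)] by simp
      finally show ?thesis using h(2) I that(1) by (auto simp: udom_def)
    qed
    have d1: "((\<lambda>s. f (s,\<theta>0+k) - f (s,\<theta>0)) has_real_derivative (ft (s,\<theta>0+k) - ft (s,\<theta>0))) (at s within I)"
      if "s \<in> I" for s
      unfolding ft_def by (intro DERIV_diff partial_t[OF T f I that])
    from mvt2[of t0 "t0+h", folded I_def, OF d1]
    have "\<exists>\<xi>\<in>I. (f (t0+h,\<theta>0+k) - f (t0+h,\<theta>0)) - (f (t0,\<theta>0+k) - f (t0,\<theta>0))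
        = h * (ft (\<xi>,\<theta>0+k) - ft (\<xi>,\<theta>0))" by (simp add: algebra_simps)
    then obtain \<xi> where \<xi>: "\<xi> \<in> I" "(f (t0+h,\<theta>0+k) - f (t0+h,\<theta>0)) - (f (t0,\<theta>0+k) - f (t0,\<theta>0))
        = h * (ft (\<xi>,\<theta>0+k) - ft (\<xi>,\<theta>0))" by blast
    have \<xi>T: "\<xi> \<in> {0..T}" using \<xi>(1) I by blast
    have d2: "((\<lambda>r. ft (\<xi>,r)) has_real_derivative A (\<xi>,r)) (at r within J)" if "r \<in> J" for r
      unfolding A_def by (rule partial_th[OF T sft \<xi>T that])
    from mvt2[of \<theta>0 "\<theta>0+k", folded J_def, OF d2]
    have "\<exists>\<eta>\<in>J. ft (\<xi>,\<theta>0+k) - ft (\<xi>,\<theta>0) = k * A (\<xi>,\<eta>)" by simp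
    then obtain \<eta> where \<eta>: "\<eta> \<in> J" "ft (\<xi>,\<theta>0+k) - ft (\<xi>,\<theta>0) = k * A (\<xi>,\<eta>)" by blast
    have t0h: "t0 + h \<in> {0..T}" by (rule h(3))
    have d3: "((\<lambda>r. f (t0+h,r) - f (t0,r)) has_real_derivative (fh (t0+h,r) - fh (t0,r))) (at r within J)"
      if "r \<in> J" for r
      unfolding fh_def by (intro DERIV_diff partial_th[OF T f t0h that] partial_th[OF T f t0 that])
    from mvt2[of \<theta>0 "\<theta>0+k", folded J_def, OF d3]
    have "\<exists>\<eta>\<in>J. (f (t0+h,\<theta>0+k) - f (t0,\<theta>0+k)) - (f (t0+h,\<theta>0) - f (t0,\<theta>0))
        = k * (fh (t0+h,\<eta>) - fh (t0,\<eta>))" by (simp add: algebra_simps)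
    then obtain \<eta>' where \<eta>': "\<eta>' \<in> J" "(f (t0+h,\<theta>0+k) - f (t0,\<theta>0+k)) - (f (t0+h,\<theta>0) - f (t0,\<theta>0))
        = k * (fh (t0+h,\<eta>') - fh (t0,\<eta>'))" by blast
    have d4: "((\<lambda>s. fh (s,\<eta>')) has_real_derivative B (s,\<eta>')) (at s within I)" if "s \<in> I" for s
      unfolding B_def by (rule partial_t[OF T sfh I that])
    from mvt2[of t0 "t0+h", folded I_def, OF d4]
    have "\<exists>\<xi>\<in>I. fh (t0+h,\<eta>') - fh (t0,\<eta>') = h * B (\<xi>,\<eta>')" by simp
    then obtain \<xi>' where \<xi>': "\<xi>' \<in> I" "fh (t0+h,\<eta>') - fh (t0,\<eta>') = h * B (\<xi>',\<eta>')" by blast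
    have "h * (k * A (\<xi>,\<eta>)) = k * (h * B (\<xi>',\<eta>'))"
      using \<xi>(2) \<eta>(2) \<eta>'(2) \<xi>'(2) by (auto simp: algebra_simps)
    moreover have "h \<noteq> 0" "k \<noteq> 0" using h(1) by (auto simp: k_def)
    ultimately have AB: "A (\<xi>,\<eta>) = B (\<xi>',\<eta>')" by simp
    have "dist (A (\<xi>,\<eta>)) (A x) < e" using dA(2) close[OF \<xi>(1) \<eta>(1)] \<delta> by auto
    moreover have "dist (B (\<xi>',\<eta>')) (B x) < e" using dB(2) close[OF \<xi>'(1) \<eta>'(1)] \<delta> by auto
    ultimately show ?thesis using AB by (simp add: dist_real_def)
  qed
  have "A x = B x"
  proof (rule ccontr)
    assume "A x \<noteq> B x"
    then have "\<bar>A x - B x\<bar> > 0" by simp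
    from key[of "\<bar>A x - B x\<bar> / 2"] this show False by simp
  qed
  then show ?thesis by (simp add: A_def B_def ft_def fh_def)
qed


lemma Arg_neg_shift:
  assumes "w \<noteq> 0"
  shows "Arg (-w) + pi = Arg w \<or> Arg (-w) + pi = Arg w + 2*pi"
  using Arg_minus[OF assms] by (auto split: if_splits)

lemma Ln_comp_deriv:
  fixes z :: complex and c :: real and S :: "(real\<times>complex) set"
  assumes z: "s*z \<notin> \<real>\<^sub>\<le>\<^sub>0" and s: "s = 1 \<or> s = -1"
  shows "((\<lambda>x. (fst x, Im (Ln (s * snd x)) + c)) has_derivative
          (\<lambda>h. (fst h, Im (snd h * inverse z)))) (at (t,z) within S)"
proof -
  have L: "(Ln has_derivative (*) (inverse (s*z))) (at (s*z))"
    using has_field_derivative_Ln[OF z] unfolding has_field_derivative_def .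
  have m: "((\<lambda>x::real\<times>complex. s * snd x) has_derivative (\<lambda>h. s * snd h)) (at (t,z) within S)"
    by (auto intro!: derivative_eq_intros)
  have "((\<lambda>x. Ln (s * snd x)) has_derivative (\<lambda>h. inverse (s*z) * (s * snd h))) (at (t,z) within S)"
  proof -
    have L2: "(Ln has_derivative (*) (inverse (s*z))) (at ((\<lambda>x::real\<times>complex. s * snd x) (t,z)) within (\<lambda>x. s * snd x) ` S)"
      using L by (simp add: has_derivative_at_withinI)
    from diff_chain_within[OF m L2] show ?thesis by (simp add: o_def)
  qed
  then have D: "((\<lambda>x. (fst x, Im (Ln (s * snd x)) + c)) has_derivative
          (\<lambda>h. (fst h, Im (inverse (s*z) * (s * snd h)) + 0))) (at (t,z) within S)"
    by (auto intro!: derivative_eq_intros)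
  have E: "(\<lambda>h. (fst h, Im (inverse (s*z) * (s * snd h)) + 0)) = (\<lambda>h. (fst h, Im (snd h * inverse z)))"
    using s by (auto simp: fun_eq_iff field_simps)
  show ?thesis using D unfolding E .
qed

lemma arg_comp:
  assumes T: "T>0" and g: "g \<in> SP T"
  shows "hasD (vdom T) (\<lambda>x. g (fst x, Arg (snd x)))
     (\<lambda>x h. fst h * dd (udom T) (1,0) g (fst x, Arg (snd x)) + Im (snd h * inverse (snd x)) * dd (udom T) (0,1) g (fst x, Arg (snd x)))"
  unfolding hasD_def
proof
  fix x assume x: "x \<in> vdom T"
  obtain t z where xz: "x = (t,z)" by (cases x)
  have t: "t \<in> {0..T}" and z: "z \<noteq> 0" using x xz by (auto simp: vdom_def)
  have sm: "smooth_on (udom T) g" and per: "\<forall>t\<in>{0..T}. \<forall>\<theta>. g (t,\<theta>+2*pi) = g (t,\<theta>)"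
    using g by (auto simp: SP_def)
  let ?G = "\<lambda>y h. fst h * dd (udom T) (1,0) g y + snd h * dd (udom T) (0,1) g y"
  have H: "hasD (udom T) g ?G" by (rule smooth_hasD(1)[OF T sm])
  have gen: "((\<lambda>x. g (fst x, Arg (snd x))) has_derivative
       (\<lambda>h. fst h * dd (udom T) (1,0) g (t, Arg z) + Im (snd h * inverse z) * dd (udom T) (0,1) g (t, Arg z)))
       (at (t,z) within vdom T)"
    if s: "s = 1 \<or> s = -1" and sz: "s*z \<notin> \<real>\<^sub>\<le>\<^sub>0" and phz: "Im (Ln (s*z)) + c = Arg z"
      and eqv: "\<forall>y\<in>vdom T. g (fst y, Im (Ln (s * snd y)) + c) = g (fst y, Arg (snd y))" for s c
  proof -
    let ?phi = "\<lambda>x::real\<times>complex. (fst x, Im (Ln (s * snd x)) + c)"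
    have dphi: "(?phi has_derivative (\<lambda>h. (fst h, Im (snd h * inverse z)))) (at (t,z) within vdom T)"
      by (rule Ln_comp_deriv[OF sz s])
    have img: "?phi ` vdom T \<subseteq> udom T" by (auto simp: vdom_def udom_def)
    have pt: "?phi (t,z) = (t, Arg z)" using phz by simp
    have "(g has_derivative ?G (t, Arg z)) (at (t, Arg z) within udom T)"
      using H t unfolding hasD_def udom_def by auto
    then have "(g has_derivative ?G (t, Arg z)) (at (?phi (t,z)) within ?phi ` vdom T)"
      unfolding pt by (rule has_derivative_subset[OF _ img])
    from diff_chain_within[OF dphi this]
    have "((g \<circ> ?phi) has_derivative ?G (t, Arg z) \<circ> (\<lambda>h. (fst h, Im (snd h * inverse z)))) (at (t,z) within vdom T)" .
    then have "((\<lambda>x. g (fst x, Arg (snd x))) has_derivative ?G (t, Arg z) \<circ> (\<lambda>h. (fst h, Im (snd h * inverse z)))) (at (t,z) within vdom T)"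
      by (rule has_derivative_transform_within[OF _ zero_less_one]) (use x xz eqv in auto)
    then show ?thesis by (simp add: o_def)
  qed
  show "((\<lambda>x. g (fst x, Arg (snd x))) has_derivative
       (\<lambda>h. fst h * dd (udom T) (1,0) g (fst x, Arg (snd x)) + Im (snd h * inverse (snd x)) * dd (udom T) (0,1) g (fst x, Arg (snd x))))
       (at x within vdom T)"
  proof (cases "z \<in> \<real>\<^sub>\<le>\<^sub>0")
    case False
    have "((\<lambda>x. g (fst x, Arg (snd x))) has_derivative
       (\<lambda>h. fst h * dd (udom T) (1,0) g (t, Arg z) + Im (snd h * inverse z) * dd (udom T) (0,1) g (t, Arg z)))
       (at (t,z) within vdom T)"
      by (rule gen[of 1 0]) (use False z in \<open>auto simp: vdom_def Arg_eq_Im_Ln\<close>)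
    then show ?thesis by (simp add: xz)
  next
    case True
    have mz: "-z \<notin> \<real>\<^sub>\<le>\<^sub>0" using True z by (auto simp: complex_nonpos_Reals_iff complex_eq_iff)
    have az: "Arg z = pi" using True z by (auto simp: complex_nonpos_Reals_iff Arg_eq_pi complex_eq_iff)
    have amz: "Arg (-z) = 0" using Arg_minus[OF z] az pi_gt_zero by auto
    have eqv: "\<forall>y\<in>vdom T. g (fst y, Im (Ln (-1 * snd y)) + pi) = g (fst y, Arg (snd y))"
    proof
      fix y assume y: "y \<in> vdom T"
      then have y0: "snd y \<noteq> 0" "fst y \<in> {0..T}" by (auto simp: vdom_def)
      then have "Im (Ln (-1 * snd y)) = Arg (- snd y)" by (simp add: Arg_eq_Im_Ln)
      then show "g (fst y, Im (Ln (-1 * snd y)) + pi) = g (fst y, Arg (snd y))"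
      proof -
        have "g (fst y, Arg (snd y) + 2*pi) = g (fst y, Arg (snd y))" using per y0(2) by blast
        then show ?thesis using Arg_neg_shift[OF y0(1)] \<open>Im (Ln (-1 * snd y)) = Arg (- snd y)\<close>
          by (auto simp: add_ac)
      qed
    qed
    have "((\<lambda>x. g (fst x, Arg (snd x))) has_derivative
       (\<lambda>h. fst h * dd (udom T) (1,0) g (t, Arg z) + Im (snd h * inverse z) * dd (udom T) (0,1) g (t, Arg z)))
       (at (t,z) within vdom T)"
      by (rule gen[of "-1" pi]) (use mz z amz az eqv in \<open>auto simp: Arg_eq_Im_Ln\<close>)
    then show ?thesis by (simp add: xz)
  qed
qed


definition cA :: "(real\<times>real \<Rightarrow> real) \<Rightarrow> real\<times>complex \<Rightarrow> real" where
  "cA g x = g (fst x, Arg (snd x))"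

definition Qf :: "real\<times>complex \<Rightarrow> real" where
  "Qf x = inverse ((Re (snd x))\<^sup>2 + (Im (snd x))\<^sup>2)"

definition GV :: "real \<Rightarrow> (real\<times>complex \<Rightarrow> real) set" where
  "GV T = {\<lambda>x. Re (snd x), \<lambda>x. Im (snd x), Qf} \<union> {cA g |g. g \<in> SP T}"

lemma cA_deriv:
  assumes "T>0" "g \<in> SP T" "x \<in> vdom T"
  shows "(cA g has_derivative (\<lambda>h. fst h * cA (dd (udom T) (1,0) g) x + Im (snd h * inverse (snd x)) * cA (dd (udom T) (0,1) g) x)) (at x within vdom T)"
  using arg_comp[OF assms(1,2)] assms(3) unfolding hasD_def cA_def[abs_def] by blast

lemma Im_div_eq: "Im (w * inverse z) = (Re z * Im w - Im z * Re w) * inverse ((Re z)\<^sup>2 + (Im z)\<^sup>2)"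
  by (simp only: divide_inverse[symmetric] Im_divide) (simp add: divide_inverse algebra_simps)

lemma ex_alg: "h \<in> A \<Longrightarrow> \<forall>x\<in>S. f x = h x \<Longrightarrow> \<exists>h\<in>A. \<forall>x\<in>S. f x = h x" by blast

lemma GV_goodD:
  assumes T: "T>0" and g: "g \<in> GV T"
  shows "goodD (vdom T) (alg (GV T)) g"
proof -
  have gen: "f \<in> GV T \<Longrightarrow> f \<in> alg (GV T)" for f by (rule alg.gen)
  have Re_in: "(\<lambda>x. Re (snd x)) \<in> alg (GV T)" and Im_in: "(\<lambda>x. Im (snd x)) \<in> alg (GV T)"
    and Q_in: "Qf \<in> alg (GV T)" by (rule gen, simp add: GV_def)+
  have cA_in: "g \<in> SP T \<Longrightarrow> cA g \<in> alg (GV T)" for g by (rule gen) (auto simp: GV_def)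
  have zero: "x \<in> vdom T \<Longrightarrow> snd x \<noteq> 0" for x by (auto simp: vdom_def)
  from g consider "g = (\<lambda>x. Re (snd x))" | "g = (\<lambda>x. Im (snd x))" | "g = Qf" | g0 where "g0 \<in> SP T" "g = cA g0"
    unfolding GV_def by blast
  then show ?thesis
  proof cases
    case 1
    show ?thesis unfolding goodD_def hasD_def 1
      by (rule exI[of _ "\<lambda>x h. Re (snd h)"]) (auto intro!: derivative_eq_intros alg.const)
  next
    case 2
    show ?thesis unfolding goodD_def hasD_def 2
      by (rule exI[of _ "\<lambda>x h. Im (snd h)"]) (auto intro!: derivative_eq_intros alg.const)
  next
    case 3
    let ?F = "\<lambda>x h. - (Qf x * Qf x) * (2 * Re (snd x) * Re (snd h) + 2 * Im (snd x) * Im (snd h))"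
    have "hasD (vdom T) Qf ?F" unfolding hasD_def
    proof
      fix x assume x: "x \<in> vdom T"
      have nz: "(Re (snd x))\<^sup>2 + (Im (snd x))\<^sup>2 \<noteq> 0" using zero[OF x] by (simp add: complex_eq_iff)
      have d: "(Qf has_derivative (\<lambda>h. - (inverse ((Re (snd x))\<^sup>2 + (Im (snd x))\<^sup>2) * (2 * Re (snd x) * Re (snd h) + 2 * Im (snd x) * Im (snd h)) * inverse ((Re (snd x))\<^sup>2 + (Im (snd x))\<^sup>2)))) (at x within vdom T)"
        unfolding Qf_def[abs_def]
        apply (rule Deriv.has_derivative_inverse[where f="\<lambda>x. (Re (snd x))\<^sup>2 + (Im (snd x))\<^sup>2"])
         apply (use nz in simp)
        apply (rule derivative_eq_intros refl)+
        apply (simp add: fun_eq_iff)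
        done
      have E: "(\<lambda>h. - (inverse ((Re (snd x))\<^sup>2 + (Im (snd x))\<^sup>2) * (2 * Re (snd x) * Re (snd h) + 2 * Im (snd x) * Im (snd h)) * inverse ((Re (snd x))\<^sup>2 + (Im (snd x))\<^sup>2))) = ?F x"
        by (simp add: fun_eq_iff Qf_def algebra_simps)
      show "(Qf has_derivative ?F x) (at x within vdom T)" using d unfolding E .
    qed
    moreover have "\<exists>h\<in>alg (GV T). \<forall>x\<in>vdom T. ?F x b = h x" for b :: "real \<times> complex"
    proof -
      have m1: "(\<lambda>x. Qf x * Qf x) \<in> alg (GV T)" by (rule alg.mult[OF Q_in Q_in])
      have m2: "(\<lambda>x. (-1) * (Qf x * Qf x)) \<in> alg (GV T)" by (rule alg.mult[OF alg.const m1])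
      have m3: "(\<lambda>x. (2 * Re (snd b)) * Re (snd x)) \<in> alg (GV T)" by (rule alg.mult[OF alg.const Re_in])
      have m4: "(\<lambda>x. (2 * Im (snd b)) * Im (snd x)) \<in> alg (GV T)" by (rule alg.mult[OF alg.const Im_in])
      have m5: "(\<lambda>x. (2 * Re (snd b)) * Re (snd x) + (2 * Im (snd b)) * Im (snd x)) \<in> alg (GV T)"
        by (rule alg.add[OF m3 m4])
      have m6: "(\<lambda>x. ((-1) * (Qf x * Qf x)) * ((2 * Re (snd b)) * Re (snd x) + (2 * Im (snd b)) * Im (snd x))) \<in> alg (GV T)"
        by (rule alg.mult[OF m2 m5])
      have "\<forall>x\<in>vdom T. ?F x b = ((-1) * (Qf x * Qf x)) * ((2 * Re (snd b)) * Re (snd x) + (2 * Im (snd b)) * Im (snd x))"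
        by (simp add: algebra_simps)
      then show ?thesis by (rule ex_alg[OF m6])
    qed
    ultimately show ?thesis unfolding goodD_def 3 by (intro exI[of _ ?F] conjI) blast+
  next
    case 4
    let ?F = "\<lambda>x h. fst h * cA (dd (udom T) (1,0) g0) x + Im (snd h * inverse (snd x)) * cA (dd (udom T) (0,1) g0) x"
    have "hasD (vdom T) g ?F" unfolding hasD_def 4
    proof
      fix x assume "x \<in> vdom T"
      then show "(cA g0 has_derivative ?F x) (at x within vdom T)" by (rule cA_deriv[OF T 4(1)])
    qed
    moreover have "\<exists>h\<in>alg (GV T). \<forall>x\<in>vdom T. ?F x b = h x" for b :: "real \<times> complex"
    proof -
      have c1: "cA (dd (udom T) (1,0) g0) \<in> alg (GV T)" by (rule cA_in[OF SP_dd(1)[OF T 4(1)]])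
      have c2: "cA (dd (udom T) (0,1) g0) \<in> alg (GV T)" by (rule cA_in[OF SP_dd(2)[OF T 4(1)]])
      have m1: "(\<lambda>x. fst b * cA (dd (udom T) (1,0) g0) x) \<in> alg (GV T)" by (rule alg.mult[OF alg.const c1])
      have m2: "(\<lambda>x. Re (snd x) * Im (snd b)) \<in> alg (GV T)" by (rule alg.mult[OF Re_in alg.const])
      have m3: "(\<lambda>x. (- Re (snd b)) * Im (snd x)) \<in> alg (GV T)" by (rule alg.mult[OF alg.const Im_in])
      have m4: "(\<lambda>x. Re (snd x) * Im (snd b) + (- Re (snd b)) * Im (snd x)) \<in> alg (GV T)" by (rule alg.add[OF m2 m3])
      have m5: "(\<lambda>x. (Re (snd x) * Im (snd b) + (- Re (snd b)) * Im (snd x)) * Qf x) \<in> alg (GV T)" by (rule alg.mult[OF m4 Q_in])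
      have m6: "(\<lambda>x. ((Re (snd x) * Im (snd b) + (- Re (snd b)) * Im (snd x)) * Qf x) * cA (dd (udom T) (0,1) g0) x) \<in> alg (GV T)"
        by (rule alg.mult[OF m5 c2])
      have m7: "(\<lambda>x. fst b * cA (dd (udom T) (1,0) g0) x + ((Re (snd x) * Im (snd b) + (- Re (snd b)) * Im (snd x)) * Qf x) * cA (dd (udom T) (0,1) g0) x) \<in> alg (GV T)"
        by (rule alg.add[OF m1 m6])
      have "\<forall>x\<in>vdom T. ?F x b = fst b * cA (dd (udom T) (1,0) g0) x + ((Re (snd x) * Im (snd b) + (- Re (snd b)) * Im (snd x)) * Qf x) * cA (dd (udom T) (0,1) g0) x"
      proof
        fix x :: "real \<times> complex"
        have "Im (snd b * inverse (snd x)) = (Re (snd x) * Im (snd b) + (- Re (snd b)) * Im (snd x)) * Qf x"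
          unfolding Im_div_eq Qf_def by simp
        then show "?F x b = fst b * cA (dd (udom T) (1,0) g0) x + ((Re (snd x) * Im (snd b) + (- Re (snd b)) * Im (snd x)) * Qf x) * cA (dd (udom T) (0,1) g0) x"
          by simp
      qed
      then show ?thesis by (rule ex_alg[OF m7])
    qed
    ultimately show ?thesis unfolding goodD_def by (intro exI[of _ ?F] conjI) blast+
  qed
qed


lemma V_deriv:
  fixes S :: "(real \<times> complex) set"
  assumes "(a has_derivative a') (at x within S)" "(b has_derivative b') (at x within S)"
  shows "((\<lambda>x. (of_real (a x) * \<i> + of_real (b x) / 2) * snd x) has_derivative
     (\<lambda>h. (of_real (a' h) * \<i> + of_real (b' h) / 2) * snd x + (of_real (a x) * \<i> + of_real (b x) / 2) * snd h)) (at x within S)"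
  by (auto intro!: derivative_eq_intros assms simp: fun_eq_iff algebra_simps)

lemma P_deriv:
  fixes S :: "(real \<times> complex) set"
  assumes "(a has_derivative a') (at x within S)" "(b has_derivative b') (at x within S)"
    "(c has_derivative c') (at x within S)" "(d has_derivative d') (at x within S)"
  shows "((\<lambda>x. 1/2 * ((Re (snd x))\<^sup>2 + (Im (snd x))\<^sup>2) * (a x * a x - c x / 2 - a x * d x / 2 - b x * b x / 4)) has_derivative
     (\<lambda>h. 1/2 * (2 * Re (snd x) * Re (snd h) + 2 * Im (snd x) * Im (snd h)) * (a x * a x - c x / 2 - a x * d x / 2 - b x * b x / 4)
        + 1/2 * ((Re (snd x))\<^sup>2 + (Im (snd x))\<^sup>2) * (2 * a x * a' h - c' h / 2 - (a' h * d x + a x * d' h) / 2 - b x * b' h / 2))) (at x within S)"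
  by (auto intro!: derivative_eq_intros assms simp: fun_eq_iff field_simps power2_eq_square)

lemma W_deriv:
  fixes S :: "(real \<times> complex) set" and V :: "real \<times> complex \<Rightarrow> complex"
  assumes "(q has_derivative q') (at x within S)" "(V has_derivative V') (at x within S)"
  shows "((\<lambda>x. of_real (q x * q x) * V x) has_derivative
     (\<lambda>h. of_real (q x * q x) * V' h + of_real (q x * q' h + q' h * q x) * V x)) (at x within S)"
  by (rule has_derivative_mult[OF has_derivative_of_real[OF has_derivative_mult[OF assms(1) assms(1)]] assms(2)])

lemma Qf_deriv:
  assumes x: "snd x \<noteq> 0"
  shows "(Qf has_derivative (\<lambda>h. - (Qf x * Qf x) * (2 * Re (snd x) * Re (snd h) + 2 * Im (snd x) * Im (snd h)))) (at x within S)"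
proof -
  have nz: "(Re (snd x))\<^sup>2 + (Im (snd x))\<^sup>2 \<noteq> 0" using x by (simp add: complex_eq_iff)
  have d: "(Qf has_derivative (\<lambda>h. - (inverse ((Re (snd x))\<^sup>2 + (Im (snd x))\<^sup>2) * (2 * Re (snd x) * Re (snd h) + 2 * Im (snd x) * Im (snd h)) * inverse ((Re (snd x))\<^sup>2 + (Im (snd x))\<^sup>2)))) (at x within S)"
    unfolding Qf_def[abs_def]
    apply (rule Deriv.has_derivative_inverse[where f="\<lambda>x. (Re (snd x))\<^sup>2 + (Im (snd x))\<^sup>2"])
     apply (use nz in simp)
    apply (rule derivative_eq_intros refl)+
    apply (simp add: fun_eq_iff)
    done
  have E: "(\<lambda>h. - (inverse ((Re (snd x))\<^sup>2 + (Im (snd x))\<^sup>2) * (2 * Re (snd x) * Re (snd h) + 2 * Im (snd x) * Im (snd h)) * inverse ((Re (snd x))\<^sup>2 + (Im (snd x))\<^sup>2)))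
     = (\<lambda>h. - (Qf x * Qf x) * (2 * Re (snd x) * Re (snd h) + 2 * Im (snd x) * Im (snd h)))"
    by (simp add: fun_eq_iff Qf_def algebra_simps)
  show ?thesis using d unfolding E .
qed


lemma cm2: "cmod z * cmod z = Re z * Re z + Im z * Im z"
  using cmod_power2[of z] by (simp add: power2_eq_square)

theorem mainTheorem1:
  fixes u :: "real \<Rightarrow> real \<Rightarrow> real" and T :: real
  assumes T_pos: "T > 0"
    and periodic: "\<forall>t\<in>{0..T}. \<forall>\<theta>. u t (\<theta> + 2 * pi) = u t \<theta>"
    and smooth: "smooth_on (udom T) (\<lambda>(t, \<theta>). u t \<theta>)"
    and CH: "\<forall>t\<in>{0..T}. \<forall>\<theta>.
      (let U = (\<lambda>(s, \<phi>). u s \<phi>); D = udom T; et = (1, 0); e\<theta> = (0, 1) in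
         dd D et U (t, \<theta>)
       - 1/4 * dd D et (dd D e\<theta> (dd D e\<theta> U)) (t, \<theta>)
       + 3 * dd D e\<theta> U (t, \<theta>) * u t \<theta>
       - 1/2 * dd D e\<theta> (dd D e\<theta> U) (t, \<theta>) * dd D e\<theta> U (t, \<theta>)
       - 1/4 * dd D e\<theta> (dd D e\<theta> (dd D e\<theta> U)) (t, \<theta>) * u t \<theta>) = 0"
  shows "\<exists>P p.
      smooth_on (udom T) (\<lambda>(t, \<theta>). p t \<theta>)
    \<and> (\<forall>t\<in>{0..T}. \<forall>\<theta>. p t (\<theta> + 2 * pi) = p t \<theta>)
    \<and> smooth_on (vdom T) P
    \<and> (\<forall>(t, z)\<in>vdom T. P (t, z) = 1/2 * (cmod z)\<^sup>2 * p t (Arg z))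
    \<and> (\<forall>b\<in>Basis. smooth_on (vdom T) (\<lambda>x. vfield T u x \<bullet> b))
    \<and> (\<forall>x\<in>vdom T.
         dd (vdom T) (1, 0) (vfield T u) x + dd (vdom T) (0, vfield T u x) (vfield T u) x
           = - grad_x T P x)
    \<and> (\<forall>x\<in>vdom T.
         div_x T (\<lambda>(t, z). of_real (1 / (cmod z) ^ 4) * vfield T u (t, z)) x = 0)"
proof -
  define U where "U = (\<lambda>(t, \<theta>). u t \<theta>)"
  have U_app: "U (t,\<theta>) = u t \<theta>" for t \<theta> by (simp add: U_def)
  define ut where "ut = dd (udom T) (1,0) U"
  define u1 where "u1 = dd (udom T) (0,1) U"
  define u11 where "u11 = dd (udom T) (0,1) u1"
  define u1t where "u1t = dd (udom T) (1,0) u1"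
  define u111 where "u111 = dd (udom T) (0,1) u11"
  define u11t where "u11t = dd (udom T) (1,0) u11"
  define u1t1 where "u1t1 = dd (udom T) (0,1) u1t"
  define u1tt where "u1tt = dd (udom T) (1,0) u1t"
  have SU: "U \<in> SP T" using smooth periodic by (simp add: SP_def U_def)
  have Sut: "ut \<in> SP T" unfolding ut_def using SP_dd[OF T_pos SU] by simp
  have Su1: "u1 \<in> SP T" unfolding u1_def using SP_dd[OF T_pos SU] by simp
  have Su11: "u11 \<in> SP T" unfolding u11_def using SP_dd[OF T_pos Su1] by simp
  have Su1t: "u1t \<in> SP T" unfolding u1t_def using SP_dd[OF T_pos Su1] by simp
  have Su111: "u111 \<in> SP T" unfolding u111_def using SP_dd[OF T_pos Su11] by simp
  have Su11t: "u11t \<in> SP T" unfolding u11t_def using SP_dd[OF T_pos Su11] by simp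
  have Su1t1: "u1t1 \<in> SP T" unfolding u1t1_def using SP_dd[OF T_pos Su1t] by simp
  have Su1tt: "u1tt \<in> SP T" unfolding u1tt_def using SP_dd[OF T_pos Su1t] by simp
  have per: "g (t,\<theta>+2*pi) = g (t,\<theta>)" if "g \<in> SP T" "t \<in> {0..T}" for g t \<theta>
    using that by (auto simp: SP_def)
  define pf where "pf = (\<lambda>y. U y * U y + (-1/2) * u1t y + (-1/2) * (U y * u11 y) + (-1/4) * (u1 y * u1 y))"
  have pf_alg: "pf \<in> alg (SP T)"
    unfolding pf_def
    by (intro alg.add alg.mult alg.const alg.gen SU Su1t Su11 Su1)
  have pf_SP: "pf \<in> SP T"
    unfolding SP_def mem_Collect_eq
  proof (intro conjI ballI allI)
    show "smooth_on (udom T) pf" by (rule SP_alg_smooth[OF T_pos pf_alg])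
    fix t \<theta> assume t: "t \<in> {0..T}"
    show "pf (t,\<theta>+2*pi) = pf (t,\<theta>)"
      unfolding pf_def using per[OF SU t] per[OF Su1t t] per[OF Su11 t] per[OF Su1 t] by simp
  qed
  define p where "p = (\<lambda>t \<theta>. pf (t,\<theta>))"
  define P where "P = (\<lambda>x::real\<times>complex. 1/2 * (cmod (snd x))\<^sup>2 * p (fst x) (Arg (snd x)))"
  have gv: "f \<in> GV T \<Longrightarrow> f \<in> alg (GV T)" for f by (rule alg.gen)
  have Re_in: "(\<lambda>x. Re (snd x)) \<in> alg (GV T)" and Im_in: "(\<lambda>x. Im (snd x)) \<in> alg (GV T)"
    by (rule gv, simp add: GV_def)+
  have cA_in: "g \<in> SP T \<Longrightarrow> cA g \<in> alg (GV T)" for g by (rule gv) (auto simp: GV_def)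
  have gd: "\<forall>g\<in>GV T. goodD (vdom T) (alg (GV T)) g" using GV_goodD[OF T_pos] by blast
  have vsmooth: "f \<in> alg (GV T) \<Longrightarrow> smooth_on (vdom T) f" for f
    by (rule alg_smooth[OF gd])
  have nz: "x \<in> vdom T \<Longrightarrow> snd x \<noteq> 0" for x by (auto simp: vdom_def)
  define V where "V = (\<lambda>x::real\<times>complex. (of_real (cA U x) * \<i> + of_real (cA u1 x) / 2) * snd x)"
  have vf_eq: "vfield T u x = V x" if x: "x \<in> vdom T" for x
  proof -
    obtain t z where xz: "x = (t,z)" by (cases x)
    have z: "z \<noteq> 0" using nz[OF x] xz by simp
    have "dd (udom T) (0, 1) (\<lambda>(s, \<phi>). u s \<phi>) (t, Arg z) = cA u1 x"
      by (simp add: cA_def xz u1_def U_def)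
    moreover have "u t (Arg z) = cA U x" by (simp add: cA_def xz U_def)
    ultimately show ?thesis using z
      by (simp add: vfield_def V_def xz Let_def field_simps)
  qed
  have derivs: "(cA U has_derivative (\<lambda>h. fst h * cA ut x + Im (snd h * inverse (snd x)) * cA u1 x)) (at x within vdom T)"
    "(cA u1 has_derivative (\<lambda>h. fst h * cA u1t x + Im (snd h * inverse (snd x)) * cA u11 x)) (at x within vdom T)"
    "(cA u1t has_derivative (\<lambda>h. fst h * cA u1tt x + Im (snd h * inverse (snd x)) * cA u1t1 x)) (at x within vdom T)"
    "(cA u11 has_derivative (\<lambda>h. fst h * cA u11t x + Im (snd h * inverse (snd x)) * cA u111 x)) (at x within vdom T)"
    if x: "x \<in> vdom T" for x
    using cA_deriv[OF T_pos SU x] cA_deriv[OF T_pos Su1 x] cA_deriv[OF T_pos Su1t x] cA_deriv[OF T_pos Su11 x]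
    by (simp_all add: ut_def u1_def u1t_def u11_def u1tt_def u1t1_def u11t_def u111_def)
  have Peq: "P = (\<lambda>x. 1/2 * ((Re (snd x))\<^sup>2 + (Im (snd x))\<^sup>2) * (cA U x * cA U x - cA u1t x / 2 - cA U x * cA u11 x / 2 - cA u1 x * cA u1 x / 4))"
    by (simp add: fun_eq_iff P_def p_def pf_def cA_def cmod_power2 algebra_simps)
  have chx: "cA ut x = 1/4 * cA u11t x - 3 * cA u1 x * cA U x + 1/2 * cA u11 x * cA u1 x + 1/4 * cA u111 x * cA U x"
    if x: "x \<in> vdom T" for x
  proof -
    have t: "fst x \<in> {0..T}" using x by (auto simp: vdom_def)
    have "cA ut x - 1/4 * cA u11t x + 3 * cA u1 x * cA U x - 1/2 * cA u11 x * cA u1 x - 1/4 * cA u111 x * cA U x = 0"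
      using CH[rule_format, OF t, of "Arg (snd x)"]
      unfolding cA_def ut_def u11t_def u11_def u1_def u111_def U_def by (simp add: Let_def)
    then show ?thesis by linarith
  qed
  have clx: "cA u1t1 x = cA u11t x" if x: "x \<in> vdom T" for x
  proof -
    have "(fst x, Arg (snd x)) \<in> udom T" using x by (auto simp: vdom_def udom_def)
    from clairaut[OF T_pos _ this, of u1] Su1 show ?thesis
      by (simp add: cA_def u1t1_def u1t_def u11t_def u11_def SP_def)
  qed
  show ?thesis
  proof (intro exI[of _ P] exI[of _ p] conjI)
    have "(\<lambda>(t, \<theta>). p t \<theta>) = pf" by (simp add: p_def)
    then show "smooth_on (udom T) (\<lambda>(t, \<theta>). p t \<theta>)" using pf_SP by (simp add: SP_def)
    show "\<forall>t\<in>{0..T}. \<forall>\<theta>. p t (\<theta> + 2 * pi) = p t \<theta>" using per[OF pf_SP] by (simp add: p_def)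
    have "P = (\<lambda>x. ((1/2) * (Re (snd x) * Re (snd x) + Im (snd x) * Im (snd x))) * cA pf x)"
      by (simp add: fun_eq_iff P_def p_def cA_def cm2 power2_eq_square)
    moreover have "(\<lambda>x. ((1/2) * (Re (snd x) * Re (snd x) + Im (snd x) * Im (snd x))) * cA pf x) \<in> alg (GV T)"
      by (intro alg.mult alg.add alg.const Re_in Im_in cA_in pf_SP)
    ultimately show "smooth_on (vdom T) P" using vsmooth by simp
    show "\<forall>(t, z)\<in>vdom T. P (t, z) = 1/2 * (cmod z)\<^sup>2 * p t (Arg z)" by (simp add: P_def)
    show "\<forall>b\<in>Basis. smooth_on (vdom T) (\<lambda>x. vfield T u x \<bullet> b)"
    proof
      fix b :: complex assume b: "b \<in> Basis"
      have re: "(\<lambda>x. (-1) * (cA U x * Im (snd x)) + (1/2) * (cA u1 x * Re (snd x))) \<in> alg (GV T)"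
        by (intro alg.mult alg.add alg.const Re_in Im_in cA_in SU Su1)
      have im: "(\<lambda>x. cA U x * Re (snd x) + (1/2) * (cA u1 x * Im (snd x))) \<in> alg (GV T)"
        by (intro alg.mult alg.add alg.const Re_in Im_in cA_in SU Su1)
      from b have "b = 1 \<or> b = \<i>" by (auto simp: Basis_complex_def)
      then show "smooth_on (vdom T) (\<lambda>x. vfield T u x \<bullet> b)"
      proof
        assume b1: "b = 1"
        show ?thesis
          by (rule smooth_on_cong[OF vsmooth[OF re]]) (simp add: b1 vf_eq V_def inner_complex_def algebra_simps)
      next
        assume bi: "b = \<i>"
        show ?thesis
          by (rule smooth_on_cong[OF vsmooth[OF im]]) (simp add: bi vf_eq V_def inner_complex_def algebra_simps)
      qed
    qed
    show "\<forall>x\<in>vdom T.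
         dd (vdom T) (1, 0) (vfield T u) x + dd (vdom T) (0, vfield T u x) (vfield T u) x
           = - grad_x T P x"
    proof
      fix x assume x: "x \<in> vdom T"
      note ders = derivs[OF x]
      define z where "z = snd x"
      define A where "A = cA U x"
      define B where "B = cA u1 x"
      define C where "C = cA u1t x"
      define D where "D = cA u11 x"
      define E where "E = cA u111 x"
      define F where "F = cA u1t1 x"
      define At where "At = cA ut x"
      define r2 where "r2 = Re z * Re z + Im z * Im z"
      have z0: "z \<noteq> 0" using nz[OF x] by (simp add: z_def)
      have r20: "r2 \<noteq> 0" using z0 by (simp add: r2_def cm2[symmetric])
      define V' where "V' = (\<lambda>h. (of_real (fst h * cA ut x + Im (snd h * inverse (snd x)) * cA u1 x) * \<i> + of_real (fst h * cA u1t x + Im (snd h * inverse (snd x)) * cA u11 x) / 2) * snd x + (of_real (cA U x) * \<i> + of_real (cA u1 x) / 2) * snd h)"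
      have dV: "(V has_derivative V') (at x within vdom T)"
        unfolding V'_def V_def by (rule V_deriv[OF ders(1,2)])
      have vfeq': "\<And>x'. x' \<in> vdom T \<Longrightarrow> dist x' x < 1 \<Longrightarrow> V x' = vfield T u x'" by (simp add: vf_eq)
      have dvf: "(vfield T u has_derivative V') (at x within vdom T)"
        by (rule has_derivative_transform_within[OF dV zero_less_one x vfeq'])
      have ddv: "dd (vdom T) v (vfield T u) x = V' v" for v by (rule dd_eq_v[OF dvf T_pos x])
      have Vx: "V x = (of_real A * \<i> + of_real B / 2) * z" by (simp add: V_def A_def B_def z_def)
      have IV: "Im (V x * inverse z) = A"
      proof -
        have "V x * inverse z = of_real A * \<i> + of_real B / 2" unfolding Vx using z0 by (simp add: mult.assoc)
        then show ?thesis by simp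
      qed
      have v1: "V' (1,0) = (of_real At * \<i> + of_real C / 2) * z" by (simp add: V'_def At_def C_def z_def)
      have v2: "V' (0, V x) = (of_real (A * B) * \<i> + of_real (A * D) / 2) * z + (of_real A * \<i> + of_real B / 2) * ((of_real A * \<i> + of_real B / 2) * z)"
        using IV unfolding V'_def by (simp add: A_def B_def D_def z_def Vx[unfolded A_def B_def z_def])
      have lhs: "dd (vdom T) (1, 0) (vfield T u) x + dd (vdom T) (0, vfield T u x) (vfield T u) x
          = z * ((of_real (C/2 + A*D/2 - A*A + B*B/4)) + \<i> * of_real (At + 2*A*B))"
        unfolding ddv vf_eq[OF x] v1 v2 by (simp add: complex_eq_iff algebra_simps)
      define Pv where "Pv = A * A - C / 2 - A * D / 2 - B * B / 4"
      define Pt where "Pt = 2 * A * B - F / 2 - B * D - A * E / 2"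
      define P' where "P' = (\<lambda>h. 1/2 * (2 * Re (snd x) * Re (snd h) + 2 * Im (snd x) * Im (snd h)) * Pv
        + 1/2 * ((Re (snd x))\<^sup>2 + (Im (snd x))\<^sup>2) * (2 * A * (fst h * At + Im (snd h * inverse (snd x)) * B)
          - (fst h * cA u1tt x + Im (snd h * inverse (snd x)) * F) / 2
          - ((fst h * At + Im (snd h * inverse (snd x)) * B) * D + A * (fst h * cA u11t x + Im (snd h * inverse (snd x)) * E)) / 2
          - B * (fst h * C + Im (snd h * inverse (snd x)) * D) / 2))"
      have dP: "(P has_derivative P') (at x within vdom T)"
        unfolding Peq P'_def Pv_def A_def B_def C_def D_def E_def F_def At_def by (rule P_deriv[OF ders])
      have ddP: "dd (vdom T) v P x = P' v" for v by (rule dd_eq_v[OF dP T_pos x])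
      have i1: "Im (inverse z) = - Im z / r2"
        using Im_div_eq[of 1 z] by (simp add: r2_def power2_eq_square divide_inverse)
      have i2: "Im (\<i> * inverse z) = Re z / r2"
        using Im_div_eq[of \<i> z] by (simp add: r2_def power2_eq_square divide_inverse)
      have i1': "Im (1 / z) = - Im z / r2" using i1 by (simp add: divide_inverse)
      have i2': "Im (\<i> / z) = Re z / r2" using i2 by (simp add: divide_inverse)
      have p1: "P' (0,1) = Re z * Pv - Im z * Pt / 2"
        using r20 unfolding P'_def Pt_def
        by (simp add: i1 i2 i1' i2' z_def[symmetric] power2_eq_square r2_def[symmetric] field_simps)
           (simp add: r2_def algebra_simps)
      have p2: "P' (0,\<i>) = Im z * Pv + Re z * Pt / 2"
        using r20 unfolding P'_def Pt_def
        by (simp add: i1 i2 i1' i2' z_def[symmetric] power2_eq_square r2_def[symmetric] field_simps)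
           (simp add: r2_def algebra_simps)
      have rhs: "grad_x T P x = z * (of_real Pv + \<i> * of_real (Pt / 2))"
        by (simp add: grad_x_def Basis_complex_def ddP p1 p2 complex_eq_iff algebra_simps)
      have ch: "At = F / 4 - 3 * B * A + D * B / 2 + E * A / 4"
        using chx[OF x] clx[OF x] by (simp add: At_def F_def B_def A_def D_def E_def)
      show "dd (vdom T) (1, 0) (vfield T u) x + dd (vdom T) (0, vfield T u x) (vfield T u) x = - grad_x T P x"
        unfolding lhs rhs by (simp add: complex_eq_iff ch Pv_def Pt_def field_simps)
    qed
    define W where "W = (\<lambda>(t, z). of_real (1 / (cmod z) ^ 4) * vfield T u (t, z))"
    have "\<forall>x\<in>vdom T. div_x T W x = 0"
    proof
      fix x assume x: "x \<in> vdom T"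
      note ders = derivs[OF x]
      define z where "z = snd x"
      define A where "A = cA U x"
      define B where "B = cA u1 x"
      define D where "D = cA u11 x"
      define r2 where "r2 = Re z * Re z + Im z * Im z"
      have z0: "z \<noteq> 0" using nz[OF x] by (simp add: z_def)
      have r20: "r2 \<noteq> 0" using z0 by (simp add: r2_def cm2[symmetric])
      define V' where "V' = (\<lambda>h. (of_real (fst h * cA ut x + Im (snd h * inverse (snd x)) * cA u1 x) * \<i> + of_real (fst h * cA u1t x + Im (snd h * inverse (snd x)) * cA u11 x) / 2) * snd x + (of_real (cA U x) * \<i> + of_real (cA u1 x) / 2) * snd h)"
      have dV: "(V has_derivative V') (at x within vdom T)"
        unfolding V'_def V_def by (rule V_deriv[OF ders(1,2)])
      note dQ = Qf_deriv[OF nz[OF x], of "vdom T"]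
      note dW0 = W_deriv[OF dQ dV]
      have weq: "\<And>x'. x' \<in> vdom T \<Longrightarrow> dist x' x < 1 \<Longrightarrow> of_real (Qf x' * Qf x') * V x' = W x'"
      proof -
        fix x' assume x': "x' \<in> vdom T"
        obtain t w where xw: "x' = (t,w)" by (cases x')
        have q: "Qf x' = inverse ((cmod w)^2)" by (simp add: Qf_def xw cmod_power2)
        have "Qf x' * Qf x' = 1 / (cmod w)^4" unfolding q
          by (simp add: power4_eq_xxxx power2_eq_square inverse_mult_distrib divide_inverse mult.assoc)
        then show "of_real (Qf x' * Qf x') * V x' = W x'"
          using vf_eq[OF x'] by (simp add: W_def xw)
      qed
      define W' where "W' = (\<lambda>h. of_real (Qf x * Qf x) * V' h + of_real (Qf x * (- (Qf x * Qf x) * (2 * Re (snd x) * Re (snd h) + 2 * Im (snd x) * Im (snd h))) + (- (Qf x * Qf x) * (2 * Re (snd x) * Re (snd h) + 2 * Im (snd x) * Im (snd h))) * Qf x) * V x)"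
      have dW: "(W has_derivative W') (at x within vdom T)"
        unfolding W'_def by (rule has_derivative_transform_within[OF dW0 zero_less_one x weq])
      have ddW: "dd (vdom T) v W x = W' v" for v by (rule dd_eq_v[OF dW T_pos x])
      have Vx: "V x = (of_real A * \<i> + of_real B / 2) * z" by (simp add: V_def A_def B_def z_def)
      have Qx: "Qf x = inverse r2" by (simp add: Qf_def r2_def z_def power2_eq_square)
      have i1: "Im (inverse z) = - Im z / r2"
        using Im_div_eq[of 1 z] by (simp add: r2_def power2_eq_square divide_inverse)
      have i2: "Im (\<i> * inverse z) = Re z / r2"
        using Im_div_eq[of \<i> z] by (simp add: r2_def power2_eq_square divide_inverse)
      have dv: "div_x T W x = dd (vdom T) (0,1) W x \<bullet> 1 + dd (vdom T) (0,\<i>) W x \<bullet> \<i>"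
        by (simp add: div_x_def Basis_complex_def)
      have i1': "Im (1 / z) = - Im z / r2" using i1 by (simp add: divide_inverse)
      have i2': "Im (\<i> / z) = Re z / r2" using i2 by (simp add: divide_inverse)
      have s1: "Re (V' (0,1)) + Im (V' (0,\<i>)) = 2 * B"
        unfolding V'_def using r20
        by (simp add: Vx i1 i2 i1' i2' z_def[symmetric] A_def[symmetric] B_def[symmetric] D_def[symmetric] field_simps)
           (simp add: r2_def algebra_simps)
      have s2: "Re z * Re (V x) + Im z * Im (V x) = B * r2 / 2"
        by (simp add: Vx r2_def algebra_simps)
      have e: "div_x T W x = Qf x * Qf x * (Re (V' (0,1)) + Im (V' (0,\<i>))) - 4 * (Qf x * Qf x * Qf x) * (Re z * Re (V x) + Im z * Im (V x))"
        unfolding dv ddW W'_def by (simp add: inner_complex_def z_def algebra_simps)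
      show "div_x T W x = 0"
        unfolding e s1 s2 Qx using r20 by (simp add: field_simps)
    qed
    then show "\<forall>x\<in>vdom T.
         div_x T (\<lambda>(t, z). of_real (1 / (cmod z) ^ 4) * vfield T u (t, z)) x = 0"
      by (simp add: W_def)
  qed
qed


end
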